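(* Let $m\ge2$ and let $\mathcal{A}\in\mathbb{T}_{m,n}$ be a circulant tensor with root tensor $\mathcal{A}_1$. If $\mathcal{A}_1$ is copositive (respectively strictly copositive), then $\mathcal{A}$ is copositive (respectively strictly copositive). Moreover, if $\mathcal{A}$ is doubly circulant, then $\mathcal{A}$ is copositive (respectively strictly copositive) if and only if $\mathcal{A}_1$ is copositive (respectively strictly copositive).
   Context: $\mathbb{T}_{m,n}$ is the space of real $m$th order $n$-dimensional tensors $\mathcal{A}=(a_{i_1\ldots i_m})$, $i_j\in[n]$. For $\mathcal{A}\in\mathbb{T}_{m,n}$ and $x\in\mathbb{R}^n$, $\mathcal{A}x^m=\sum_{i_1,\dots,i_m}a_{i_1\ldots i_m}x_{i_1}\cdots x_{i_m}$. $\mathcal{A}$ is copositive if $\mathcal{A}x^m\ge0$ for all $x\in\mathbb{R}^n_+$, and strictly copositive if $\mathcal{A}x^m>0$ for all $x\in\mathbb{R}^n_+\setminus\{0\}$ (same definitions in $\mathbb{T}_{m-1,n}$). $\mathcal{A}$ is circulant if $a_{i_1\ldots i_m}=a_{k_1\ldots k_m}$ whenever $k_j\equiv i_j+1 \pmod n$ with $k_j\in[n]$ for all $j$. The $k$th row tensor $\mathcal{A}_k\in\mathbb{T}_{m-1,n}$ has entries $(\mathcal{A}_k)_{j_1\ldots j_{m-1}}=a_{kj_1\ldots j_{m-1}}$; $\mathcal{A}_1$ is the root tensor. A circulant tensor is doubly circulant if all its row tensors coincide with its root tensor, i.e. $\mathcal{A}_k=\mathcal{A}_1$ for all $k\in[n]$.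 *)

theory Defs
  imports Complex_Main
begin

text \<open>Tensors of order m and dimension n are functions from index lists to reals;
  only lists of length m with entries in {0..<n} are relevant (0-based indices
  stand for the paper's [n] = {1..n}). Vectors x in R^n are functions nat to real,
  only the values at 0..<n are relevant.\<close>

type_synonym tensor = "nat list \<Rightarrow> real"

definition idx :: "nat \<Rightarrow> nat \<Rightarrow> nat list set" where
  "idx m n = {is. length is = m \<and> set is \<subseteq> {..<n}}"

definition tensor_form :: "nat \<Rightarrow> nat \<Rightarrow> tensor \<Rightarrow> (nat \<Rightarrow> real) \<Rightarrow> real" where
  "tensor_form m n A x = (\<Sum>is\<in>idx m n. A is * prod_list (map x is))"

definition nonneg_vec :: "nat \<Rightarrow> (nat \<Rightarrow> real) \<Rightarrow> bool" where
  "nonneg_vec n x \<longleftrightarrow> (\<forall>i<n. 0 \<le> x i)"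

definition copositive :: "nat \<Rightarrow> nat \<Rightarrow> tensor \<Rightarrow> bool" where
  "copositive m n A \<longleftrightarrow> (\<forall>x. nonneg_vec n x \<longrightarrow> 0 \<le> tensor_form m n A x)"

definition strictly_copositive :: "nat \<Rightarrow> nat \<Rightarrow> tensor \<Rightarrow> bool" where
  "strictly_copositive m n A \<longleftrightarrow>
     (\<forall>x. nonneg_vec n x \<and> (\<exists>i<n. x i \<noteq> 0) \<longrightarrow> 0 < tensor_form m n A x)"

definition circulant :: "nat \<Rightarrow> nat \<Rightarrow> tensor \<Rightarrow> bool" where
  "circulant m n A \<longleftrightarrow> (\<forall>is\<in>idx m n. A (map (\<lambda>i. (i + 1) mod n) is) = A is)"

text \<open>k-th row tensor (order m-1); the root tensor is row_tensor A 0.\<close>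
definition row_tensor :: "tensor \<Rightarrow> nat \<Rightarrow> tensor" where
  "row_tensor A k = (\<lambda>js. A (k # js))"

definition doubly_circulant :: "nat \<Rightarrow> nat \<Rightarrow> tensor \<Rightarrow> bool" where
  "doubly_circulant m n A \<longleftrightarrow> circulant m n A \<and>
     (\<forall>k<n. \<forall>js\<in>idx (m - 1) n. row_tensor A k js = row_tensor A 0 js)"

end

theory Submission
  imports Defs
begin

lemma idx_Suc: "idx (Suc m) n = (\<lambda>(k,js). k#js) ` ({..<n} \<times> idx m n)"
proof (rule set_eqI)
  fix l show "l \<in> idx (Suc m) n \<longleftrightarrow> l \<in> (\<lambda>(k,js). k#js) ` ({..<n} \<times> idx m n)"
    by (cases l) (auto simp: idx_def)
qed

lemma finite_idx: "finite (idx m n)"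
proof (induction m)
  case 0 then show ?case by (simp add: idx_def)
next
  case (Suc m) then show ?case by (simp add: idx_Suc)
qed

lemma form_Suc:
  "tensor_form (Suc m) n A x = (\<Sum>k<n. x k * tensor_form m n (row_tensor A k) x)"
proof -
  have inj: "inj_on (\<lambda>(k,js). k#js) ({..<n} \<times> idx m n)"
    by (auto simp: inj_on_def)
  have "tensor_form (Suc m) n A x = sum (\<lambda>l. A l * prod_list (map x l)) ((\<lambda>(k,js). k#js) ` ({..<n} \<times> idx m n))"
    by (simp only: tensor_form_def idx_Suc)
  also have "\<dots> = sum ((\<lambda>l. A l * prod_list (map x l)) \<circ> (\<lambda>(k,js). k#js)) ({..<n} \<times> idx m n)"
    by (rule sum.reindex[OF inj])
  also have "\<dots> = (\<Sum>(k,js)\<in>{..<n} \<times> idx m n. A (k#js) * (x k * prod_list (map x js)))"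
    by (rule sum.cong) auto
  also have "\<dots> = (\<Sum>k<n. \<Sum>js\<in>idx m n. A (k#js) * (x k * prod_list (map x js)))"
    by (rule sum.cartesian_product[symmetric])
  also have "\<dots> = (\<Sum>k<n. x k * tensor_form m n (row_tensor A k) x)"
    unfolding tensor_form_def row_tensor_def sum_distrib_left
    by (rule sum.cong[OF refl], rule sum.cong[OF refl]) (simp add: algebra_simps)
  finally show ?thesis .
qed

lemma circ_iter:
  assumes "circulant m n A" "is \<in> idx m n"
  shows "A (map (\<lambda>i. (i + t) mod n) is) = A is"
proof (induction t)
  case 0
  have lt: "\<forall>i\<in>set is. i < n" using assms(2) by (auto simp: idx_def)
  have "map (\<lambda>i. i mod n) is = is"
    by (rule map_idI) (use lt in simp)
  then show ?case by simp
next
  case (Suc t)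
  have lt: "\<forall>i\<in>set is. i < n" using assms(2) by (auto simp: idx_def)
  have "(i + t) mod n < n" if "i \<in> set is" for i
  proof -
    have "n > 0" using lt that by fastforce
    then show ?thesis by simp
  qed
  then have mem: "map (\<lambda>i. (i + t) mod n) is \<in> idx m n"
    using assms(2) unfolding idx_def by auto
  have eq: "((i + t) mod n + 1) mod n = (i + Suc t) mod n" for i
    using mod_add_left_eq[of "i+t" n 1] by simp
  have meq: "map (\<lambda>i. (i + Suc t) mod n) is = map (\<lambda>i. (i + 1) mod n) (map (\<lambda>i. (i + t) mod n) is)"
    by (simp only: map_map comp_def eq)
  have h: "A (map (\<lambda>i. (i + 1) mod n) (map (\<lambda>i. (i + t) mod n) is)) = A (map (\<lambda>i. (i + t) mod n) is)"
    using assms(1) mem unfolding circulant_def by blast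
  show ?case unfolding meq using h Suc.IH by (rule trans)
qed

lemma row_shift:
  assumes circ: "circulant (Suc m) n A" and k: "k < n"
  shows "tensor_form m n (row_tensor A k) x
       = tensor_form m n (row_tensor A 0) (\<lambda>j. x ((j + k) mod n))"
proof -
  define f where "f j = (j + (n - k)) mod n" for j
  define g where "g j = (j + k) mod n" for j
  have fg: "f (g j) = j" if "j < n" for j
  proof -
    have "f (g j) = ((j + k) mod n + (n - k)) mod n" by (simp add: f_def g_def)
    also have "\<dots> = (j + k + (n - k)) mod n" by (simp add: mod_add_left_eq)
    also have "\<dots> = (j + n) mod n" using k by simp
    also have "\<dots> = j" using that by simp
    finally show ?thesis .
  qed
  have gf: "g (f j) = j" if "j < n" for j
  proof -
    have "g (f j) = ((j + (n - k)) mod n + k) mod n" by (simp add: f_def g_def)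
    also have "\<dots> = (j + (n - k) + k) mod n" by (simp add: mod_add_left_eq)
    also have "\<dots> = (j + n) mod n" using k by simp
    also have "\<dots> = j" using that by simp
    finally show ?thesis .
  qed
  have npos: "n > 0" using k by simp
  have fr: "f j < n" for j using npos by (simp add: f_def)
  have gr: "g j < n" for j using npos by (simp add: g_def)
  have key: "A (k # js) = A (0 # map f js)" if js: "js \<in> idx m n" for js
  proof -
    have mem: "0 # map f js \<in> idx (Suc m) n"
      using js npos fr by (auto simp: idx_def)
    have "map (\<lambda>i. (i + k) mod n) (0 # map f js) = k # js"
      using js k gf by (auto simp: idx_def g_def intro!: map_idI)
    then show ?thesis using circ_iter[OF circ mem, of k] by simp
  qed
  show ?thesis
    unfolding tensor_form_def row_tensor_def
  proof (rule sum.reindex_bij_witness[where i="map g" and j="map f"])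
    fix js assume js: "js \<in> idx m n"
    then show "map g (map f js) = js" using gf by (auto simp: idx_def intro!: map_idI)
    show "map f js \<in> idx m n" using js fr by (auto simp: idx_def)
    have "prod_list (map (\<lambda>j. x ((j + k) mod n)) (map f js)) = prod_list (map x (map g (map f js)))"
      by (simp add: g_def comp_def)
    also have "map g (map f js) = js" using js gf by (auto simp: idx_def intro!: map_idI)
    finally show "A (0 # map f js) * prod_list (map (\<lambda>j. x ((j + k) mod n)) (map f js))
        = A (k # js) * prod_list (map x js)" using key[OF js] by simp
  next
    fix js assume js: "js \<in> idx m n"
    then show "map f (map g js) = js" using fg by (auto simp: idx_def intro!: map_idI)
    show "map g js \<in> idx m n" using js gr by (auto simp: idx_def)
  qed
qed

lemma form_zero:
  assumes "m \<ge> 1" "\<forall>i<n. x i = 0"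
  shows "tensor_form m n B x = 0"
  unfolding tensor_form_def
proof (rule sum.neutral, rule ballI)
  fix l assume l: "l \<in> idx m n"
  have "l \<noteq> []" using l assms(1) by (auto simp: idx_def)
  then obtain a r where lr: "l = a # r" by (cases l) auto
  have "a < n" using l lr by (simp add: idx_def)
  then have "x a = 0" using assms(2) by simp
  then show "B l * prod_list (map x l) = 0" using \<open>l = a # r\<close> by simp
qed

theorem mainTheorem4:
  fixes m n :: nat and A :: tensor
  assumes "m \<ge> 2" and "circulant m n A"
  shows "(copositive (m - 1) n (row_tensor A 0) \<longrightarrow> copositive m n A)
       \<and> (strictly_copositive (m - 1) n (row_tensor A 0) \<longrightarrow> strictly_copositive m n A)
       \<and> (doubly_circulant m n A \<longrightarrow>
            (copositive m n A \<longleftrightarrow> copositive (m - 1) n (row_tensor A 0))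
          \<and> (strictly_copositive m n A \<longleftrightarrow> strictly_copositive (m - 1) n (row_tensor A 0)))"
proof -
  obtain m' where mm: "m = Suc m'" using assms(1) by (cases m) auto
  have m1: "m' \<ge> 1" using assms(1) mm by simp
  have circ: "circulant (Suc m') n A" using assms(2) mm by simp
  define B where "B = row_tensor A 0"
  define sh where "sh x k = (\<lambda>j. x ((j + k) mod n))" for x :: "nat \<Rightarrow> real" and k
  have expand: "tensor_form m n A x = (\<Sum>k<n. x k * tensor_form m' n B (sh x k))" for x
    unfolding mm form_Suc
  proof (rule sum.cong[OF refl])
    fix k assume "k \<in> {..<n}"
    then have "k < n" by simp
    from row_shift[OF circ this, of x]
    show "x k * tensor_form m' n (row_tensor A k) x = x k * tensor_form m' n B (sh x k)"
      by (simp add: B_def sh_def)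
  qed
  have shnn: "nonneg_vec n (sh x k)" if "nonneg_vec n x" "n > 0" for x k
    unfolding nonneg_vec_def sh_def
  proof (intro allI impI)
    fix i assume "i < n"
    then have "(i + k) mod n < n" by simp
    then show "0 \<le> x ((i + k) mod n)" using that(1) unfolding nonneg_vec_def by blast
  qed
  have P1: "copositive m n A" if c: "copositive m' n B"
    unfolding copositive_def
  proof (intro allI impI)
    fix x assume x: "nonneg_vec n x"
    show "0 \<le> tensor_form m n A x" unfolding expand
    proof (rule sum_nonneg)
      fix k assume k: "k \<in> {..<n}"
      then have "0 \<le> tensor_form m' n B (sh x k)" using c shnn[OF x] by (auto simp: copositive_def)
      moreover have "0 \<le> x k" using x k by (auto simp: nonneg_vec_def)
      ultimately show "0 \<le> x k * tensor_form m' n B (sh x k)" by simp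
    qed
  qed
  have P2: "strictly_copositive m n A" if c: "strictly_copositive m' n B"
    unfolding strictly_copositive_def
  proof (intro allI impI)
    fix x assume "nonneg_vec n x \<and> (\<exists>i<n. x i \<noteq> 0)"
    then have x: "nonneg_vec n x" and "\<exists>i<n. x i \<noteq> 0" by auto
    then obtain i where i: "i < n" "x i \<noteq> 0" by auto
    have c': "copositive m' n B" unfolding copositive_def
    proof (intro allI impI)
      fix y assume y: "nonneg_vec n y"
      show "0 \<le> tensor_form m' n B y"
      proof (cases "\<forall>i<n. y i = 0")
        case True then show ?thesis using form_zero[OF m1] by simp
      next
        case False then show ?thesis using c y unfolding strictly_copositive_def
          by (simp add: less_imp_le)
      qed
    qed
    have nz: "\<exists>j<n. sh x k j \<noteq> 0" if "k < n" for k
    proof -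
      have "sh x k ((i + (n - k)) mod n) = x i"
        using that i by (simp add: sh_def mod_add_left_eq)
      moreover have "(i + (n - k)) mod n < n" using i by simp
      ultimately show ?thesis using i(2) by (intro exI[of _ "(i + (n - k)) mod n"] conjI) simp_all
    qed
    have terms: "0 \<le> x k * tensor_form m' n B (sh x k)" if "k < n" for k
    proof -
      have "0 \<le> tensor_form m' n B (sh x k)"
        using c' shnn[OF x] that unfolding copositive_def by simp
      moreover have "0 \<le> x k" using x that unfolding nonneg_vec_def by simp
      ultimately show ?thesis by simp
    qed
    have "0 < tensor_form m' n B (sh x i)"
      using c shnn[OF x] nz[OF i(1)] i unfolding strictly_copositive_def by simp
    moreover have "0 < x i" using x i unfolding nonneg_vec_def by force
    ultimately have "0 < x i * tensor_form m' n B (sh x i)" by simp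
    also have "\<dots> \<le> (\<Sum>k<n. x k * tensor_form m' n B (sh x k))"
      by (rule member_le_sum) (use i terms in auto)
    finally show "0 < tensor_form m n A x" unfolding expand .
  qed
  have P3: "(copositive m n A \<longleftrightarrow> copositive m' n B) \<and>
            (strictly_copositive m n A \<longleftrightarrow> strictly_copositive m' n B)"
    if d: "doubly_circulant m n A"
  proof -
    have rows: "row_tensor A k js = B js" if "k < n" "js \<in> idx m' n" for k js
    proof -
      have mm1: "m - 1 = m'" using mm by simp
      have "\<forall>k<n. \<forall>js\<in>idx m' n. row_tensor A k js = row_tensor A 0 js"
        using d unfolding doubly_circulant_def mm1 by blast
      then show ?thesis using that unfolding B_def by blast
    qed
    have exp2: "tensor_form m n A x = (\<Sum>k<n. x k) * tensor_form m' n B x" for x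
      unfolding mm form_Suc sum_distrib_right
      by (rule sum.cong) (auto simp: tensor_form_def rows intro!: sum.cong)
    have "copositive m' n B" if c: "copositive m n A"
      unfolding copositive_def
    proof (intro allI impI)
      fix x assume x: "nonneg_vec n x"
      show "0 \<le> tensor_form m' n B x"
      proof (cases "\<forall>i<n. x i = 0")
        case True then show ?thesis using form_zero[OF m1] by simp
      next
        case False
        then obtain i where i: "i < n" "x i \<noteq> 0" by auto
        have "0 < (\<Sum>k<n. x k)"
          using x i by (intro sum_pos2[of _ i]) (auto simp: nonneg_vec_def less_le)
        moreover have "0 \<le> tensor_form m n A x"
          using c x unfolding copositive_def by simp
        then have h: "0 \<le> (\<Sum>k<n. x k) * tensor_form m' n B x"
          by (simp only: exp2)
        ultimately show ?thesis using h by (simp add: zero_le_mult_iff)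
      qed
    qed
    moreover have "strictly_copositive m' n B" if c: "strictly_copositive m n A"
      unfolding strictly_copositive_def
    proof (intro allI impI)
      fix x assume "nonneg_vec n x \<and> (\<exists>i<n. x i \<noteq> 0)"
      then obtain i where x: "nonneg_vec n x" and i: "i < n" "x i \<noteq> 0" by auto
      have "0 < (\<Sum>k<n. x k)"
        using x i by (intro sum_pos2[of _ i]) (auto simp: nonneg_vec_def less_le)
      moreover have "0 < tensor_form m n A x"
        using c x i unfolding strictly_copositive_def by blast
      then have h: "0 < (\<Sum>k<n. x k) * tensor_form m' n B x"
        by (simp only: exp2)
      ultimately show "0 < tensor_form m' n B x" using h by (simp add: zero_less_mult_iff)
    qed
    ultimately show ?thesis using P1 P2 by blast
  qed
  show ?thesis using P1 P2 P3 mm B_def by simp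
qed

end
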